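(* Assume (A1) and (A2). Run $\mathrm{BOGD}_{\mathrm{IP}}$ with any step size $\eta>0$, any positive integer block size $K$ dividing $T$, and any tolerance $\epsilon>0$. For any $\mathbf{u}_1,\dots,\mathbf{u}_T\in\mathcal{K}$, writing $s(m)=(m-1)K+1$ and $P_T'=\sum_{m=2}^{T/K}\|\mathbf{u}_{s(m-1)}-\mathbf{u}_{s(m)}\|_2$, we have $$\sum_{m=1}^{T/K}\sum_{k=1}^{K}\big\langle\nabla f_{(m-1)K+k}(\mathbf{x}_m),\,\tilde{\mathbf{y}}_m-\mathbf{u}_{s(m)}\big\rangle\le\frac{7}{4\eta}D^2+\frac{\eta}{2}KTG^2+\frac{D}{\eta}P_T'.$$
   Context: Standing assumptions: (A1) $\mathcal{K}\subseteq\mathbb{R}^d$ is convex and compact, contains $\mathbf{0}$, and $\mathcal{K}\subseteq R\mathcal{B}$ where $R\mathcal{B}$ is the closed Euclidean ball of radius $R$ centered at $\mathbf{0}$; set $D=2R$, so $\|\mathbf{x}-\mathbf{x}'\|_2\le D$ for all $\mathbf{x},\mathbf{x}'\in\mathcal{K}$. (A2) Each loss $f_t$ is $G$-Lipschitz on $\mathcal{K}$, and its (sub)gradients satisfy $\|\nabla f_t(\mathbf{x})\|_2\le G$. Infeasible projection oracle $\mathcal{O}_{\mathrm{IP}}(\mathcal{K},\epsilon,\mathbf{x}_0,\mathbf{y}_0)$: given $\epsilon>0$, $\mathbf{x}_0\in\mathcal{K}$, $\mathbf{y}_0\in\mathbb{R}^d$, returns $(\mathbf{x},\tilde{\mathbf{y}})\in\mathcal{K}\times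 R\mathcal{B}$ with $\|\mathbf{x}-\tilde{\mathbf{y}}\|_2\le\sqrt{3\epsilon}$ and $\|\tilde{\mathbf{y}}-\mathbf{z}\|_2\le\|\mathbf{y}_0-\mathbf{z}\|_2$ for all $\mathbf{z}\in\mathcal{K}$. Algorithm $\mathrm{BOGD}_{\mathrm{IP}}$ (step size $\eta$, block size $K$, tolerance $\epsilon$): pick $\mathbf{x}_1\in\mathcal{K}$ arbitrary, $\tilde{\mathbf{y}}_1=\mathbf{x}_1$. Rounds are split into blocks; block $m$ consists of rounds $(m-1)K+1,\dots,mK$. At every round $t$ of block $m$ the algorithm plays $\mathbf{x}_t=\mathbf{x}_m$. At the last round of block $m$ it sets $\mathbf{y}_{m+1}=\tilde{\mathbf{y}}_m-\eta\sum_{r=(m-1)K+1}^{mK}\nabla f_r(\mathbf{x}_m)$ and $(\mathbf{x}_{m+1},\tilde{\mathbf{y}}_{m+1})=\mathcal{O}_{\mathrm{IP}}(\mathcal{K},\epsilon,\mathbf{x}_m,\mathbf{y}_{m+1})$. *)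

theory Defs
  imports "HOL-Analysis.Analysis"
begin

definition is_IP_oracle ::
  "'a::euclidean_space set \<Rightarrow> real \<Rightarrow> (real \<Rightarrow> 'a \<Rightarrow> 'a \<Rightarrow> 'a \<times> 'a) \<Rightarrow> bool" where
  "is_IP_oracle Kset R Orc \<longleftrightarrow>
     (\<forall>eps>0. \<forall>x0\<in>Kset. \<forall>y0.
        fst (Orc eps x0 y0) \<in> Kset \<and>
        snd (Orc eps x0 y0) \<in> cball 0 R \<and>
        norm (fst (Orc eps x0 y0) - snd (Orc eps x0 y0)) \<le> sqrt (3 * eps) \<and>
        (\<forall>z\<in>Kset. norm (snd (Orc eps x0 y0) - z) \<le> norm (y0 - z)))"

text \<open>State of BOGD_IP: \<open>bogd_ip Orc eta Kb eps g x1 m\<close> is the pair (x_{m+1}, y~_{m+1})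
  (0-based index m, i.e. block m+1). \<open>g r x\<close> is the (sub)gradient of f_r at x.\<close>
fun bogd_ip ::
  "(real \<Rightarrow> 'a \<Rightarrow> 'a \<Rightarrow> 'a \<times> 'a) \<Rightarrow> real \<Rightarrow> nat \<Rightarrow> real \<Rightarrow> (nat \<Rightarrow> 'a \<Rightarrow> 'a) \<Rightarrow> 'a
     \<Rightarrow> nat \<Rightarrow> 'a::real_vector \<times> 'a" where
  "bogd_ip Orc eta Kb eps g x1 0 = (x1, x1)"
| "bogd_ip Orc eta Kb eps g x1 (Suc m) =
     (let st = bogd_ip Orc eta Kb eps g x1 m;
          y = snd st - eta *\<^sub>R (\<Sum>r = m * Kb + 1 .. (m + 1) * Kb. g r (fst st))
      in Orc eps (fst st) y)"

end

theory Submission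
  imports Defs
begin

lemma key_sq:
  fixes y a b :: "'a::real_normed_vector"
  assumes "norm y \<le> R" "norm a \<le> R" "norm b \<le> R"
  shows "norm (y - b)^2 - norm (y - a)^2 \<le> 4 * R * norm (a - b)"
proof -
  have d: "\<bar>norm (y - b) - norm (y - a)\<bar> \<le> norm (a - b)"
    by (metis norm_triangle_ineq3 diff_diff_eq2 add.commute diff_add_cancel minus_diff_eq norm_minus_commute abs_le_iff norm_triangle_ineq4 order_trans)
  have s: "norm (y - b) + norm (y - a) \<le> 4 * R"
    using norm_triangle_ineq4[of y b] norm_triangle_ineq4[of y a] assms by linarith
  have "norm (y - b)^2 - norm (y - a)^2 = (norm (y - b) - norm (y - a)) * (norm (y - b) + norm (y - a))"
    by (simp add: power2_eq_square algebra_simps)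
  also have "\<dots> \<le> \<bar>norm (y - b) - norm (y - a)\<bar> * (norm (y - b) + norm (y - a))"
    by (intro mult_right_mono) auto
  also have "\<dots> \<le> norm (a - b) * (4 * R)"
    using d s by (intro mult_mono) auto
  finally show ?thesis by (simp add: algebra_simps)
qed

lemma tele:
  fixes y z :: "nat \<Rightarrow> 'a::real_normed_vector" and a :: "nat \<Rightarrow> real"
  assumes h: "h \<ge> 0" and R: "R \<ge> 0"
    and A: "\<And>m. 1 \<le> m \<Longrightarrow> m \<le> M \<Longrightarrow> a m \<le> h * (norm (y m - z m)^2 - norm (y (Suc m) - z m)^2) + c"
    and Y: "\<And>m. 1 \<le> m \<Longrightarrow> m \<le> M \<Longrightarrow> norm (y m) \<le> R"
    and Z: "\<And>m. 1 \<le> m \<Longrightarrow> m \<le> M \<Longrightarrow> norm (z m) \<le> R"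
  shows "(\<Sum>m=1..M. a m) \<le> h * (2*R)^2 + M * c + h * (4*R) * (\<Sum>m=2..M. norm (z (m-1) - z m))"
proof (cases "M = 0")
  case True
  then show ?thesis using h by simp
next
  case False
  have gen: "N \<le> M \<Longrightarrow> 1 \<le> N \<Longrightarrow> (\<Sum>m=1..N. a m) \<le> h * (norm (y 1 - z 1)^2 - norm (y (Suc N) - z N)^2) + N * c
      + h * (4*R) * (\<Sum>m=2..N. norm (z (m-1) - z m))" for N
  proof (induction N)
    case 0 then show ?case by simp
  next
    case (Suc n)
    show ?case
    proof (cases "n = 0")
      case True
      then show ?thesis using A[of 1] Suc.prems by simp
    next
      case False
      have IH: "(\<Sum>m=1..n. a m) \<le> h * (norm (y 1 - z 1)^2 - norm (y (Suc n) - z n)^2) + n * c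
          + h * (4*R) * (\<Sum>m=2..n. norm (z (m-1) - z m))"
        using Suc False by simp
      have As: "a (Suc n) \<le> h * (norm (y (Suc n) - z (Suc n))^2 - norm (y (Suc (Suc n)) - z (Suc n))^2) + c"
        using A[of "Suc n"] Suc.prems by simp
      have k: "norm (y (Suc n) - z (Suc n))^2 - norm (y (Suc n) - z n)^2 \<le> 4 * R * norm (z n - z (Suc n))"
        using key_sq Y[of "Suc n"] Z[of n] Z[of "Suc n"] Suc.prems False by simp
      have k2: "h * (norm (y (Suc n) - z (Suc n))^2 - norm (y (Suc n) - z n)^2) \<le> h * (4 * R * norm (z n - z (Suc n)))"
        using k h by (rule mult_left_mono)
      have s1: "(\<Sum>m=1..Suc n. a m) = (\<Sum>m=1..n. a m) + a (Suc n)" by simp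
      have s2: "(\<Sum>m=2..Suc n. norm (z (m-1) - z m)) = (\<Sum>m=2..n. norm (z (m-1) - z m)) + norm (z n - z (Suc n))"
        using False by simp
      show ?thesis unfolding s1 s2 using IH As k2 by (simp add: algebra_simps)
    qed
  qed
  have g: "(\<Sum>m=1..M. a m) \<le> h * (norm (y 1 - z 1)^2 - norm (y (Suc M) - z M)^2) + M * c
      + h * (4*R) * (\<Sum>m=2..M. norm (z (m-1) - z m))"
    using gen[of M] False by simp
  have "norm (y 1 - z 1) \<le> 2 * R" using norm_triangle_ineq4[of "y 1" "z 1"] Y[of 1] Z[of 1] False by simp
  hence "norm (y 1 - z 1)^2 \<le> (2*R)^2" by (intro power_mono) auto
  moreover have "0 \<le> norm (y (Suc M) - z M)^2" by simp
  ultimately have "norm (y 1 - z 1)^2 - norm (y (Suc M) - z M)^2 \<le> (2*R)^2" by linarith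
  hence "h * (norm (y 1 - z 1)^2 - norm (y (Suc M) - z M)^2) \<le> h * (2*R)^2"
    using h by (rule mult_left_mono)
  then show ?thesis using g by linarith
qed



lemma bogd_inv:
  assumes ip: "is_IP_oracle Kset R Orc" and x1: "x1 \<in> Kset" and B: "Kset \<subseteq> cball 0 R"
    and e: "eps > 0"
  shows "fst (bogd_ip Orc eta Kb eps g x1 m) \<in> Kset \<and> snd (bogd_ip Orc eta Kb eps g x1 m) \<in> cball 0 R"
proof (induction m)
  case 0 then show ?case using x1 B by auto
next
  case (Suc m)
  then show ?case using ip e unfolding is_IP_oracle_def by (simp add: Let_def)
qed

lemma sq_expand:
  fixes v G :: "'a::real_inner"
  shows "norm (v - e *\<^sub>R G)^2 = norm v ^2 - 2 * e * inner G v + e^2 * norm G ^2"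
  unfolding power2_norm_eq_inner by (simp add: inner_diff_left inner_diff_right inner_commute algebra_simps power2_eq_square)

theorem lemma5:
  fixes Kset :: "'a::euclidean_space set"
    and R G eta eps :: real
    and T Kb :: nat
    and f :: "nat \<Rightarrow> 'a \<Rightarrow> real"
    and g :: "nat \<Rightarrow> 'a \<Rightarrow> 'a"
    and Orc :: "real \<Rightarrow> 'a \<Rightarrow> 'a \<Rightarrow> 'a \<times> 'a"
    and x1 :: 'a
    and u :: "nat \<Rightarrow> 'a"
  assumes convex: "convex Kset" and compact: "compact Kset"
    and zero_in: "0 \<in> Kset" and bounded: "Kset \<subseteq> cball 0 R"
    and lipschitz: "\<And>t. \<forall>x\<in>Kset. \<forall>y\<in>Kset. \<bar>f t x - f t y\<bar> \<le> G * norm (x - y)"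
    and grad_bound: "\<And>t x. x \<in> Kset \<Longrightarrow> norm (g t x) \<le> G"
    and ip_orc: "is_IP_oracle Kset R Orc"
    and eta_pos: "eta > 0" and Kb_pos: "Kb > 0" and Kb_dvd: "Kb dvd T"
    and eps_pos: "eps > 0"
    and x1_in: "x1 \<in> Kset"
    and u_in: "\<And>t. t \<in> {1..T} \<Longrightarrow> u t \<in> Kset"
  shows
    "(let D = 2 * R;
          xs = (\<lambda>m. fst (bogd_ip Orc eta Kb eps g x1 (m - 1)));
          ys = (\<lambda>m. snd (bogd_ip Orc eta Kb eps g x1 (m - 1)));
          s = (\<lambda>m. (m - 1) * Kb + 1);
          P' = (\<Sum>m = 2 .. T div Kb. norm (u (s (m - 1)) - u (s m)))
      in (\<Sum>m = 1 .. T div Kb. \<Sum>k = 1 .. Kb.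
            inner (g ((m - 1) * Kb + k) (xs m)) (ys m - u (s m)))
         \<le> 7 / (4 * eta) * D\<^sup>2 + eta / 2 * real Kb * real T * G\<^sup>2 + D / eta * P')"
proof -
  define st where "st = bogd_ip Orc eta Kb eps g x1"
  define M where "M = T div Kb"
  have TM: "T = M * Kb" using Kb_dvd unfolding M_def by auto
  have R0: "R \<ge> 0" using zero_in bounded by auto
  have G0: "G \<ge> 0" using grad_bound[OF zero_in] norm_ge_zero order_trans by blast
  have inv: "fst (st m) \<in> Kset \<and> snd (st m) \<in> cball 0 R" for m
    unfolding st_def using bogd_inv[OF ip_orc x1_in bounded eps_pos] .
  define y where "y = (\<lambda>m. snd (st (m - 1)))"
  define z where "z = (\<lambda>m. u ((m - 1) * Kb + 1))"
  define a where "a = (\<lambda>m. \<Sum>k = 1 .. Kb. inner (g ((m - 1) * Kb + k) (fst (st (m - 1)))) (y m - z m))"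
  define h where "h = 1 / (2 * eta)"
  define c where "c = eta / 2 * (real Kb * G)^2"
  have zin: "z m \<in> Kset" if "1 \<le> m" "m \<le> M" for m
  proof -
    have "(m - 1) * Kb + 1 \<le> T" using that TM Kb_pos
      by (metis Suc_eq_plus1 Suc_le_eq diff_less less_le_trans mult_less_cancel2 zero_less_one less_imp_le_nat
          le_less_trans nat_mult_le_cancel_disj le_antisym not_less)
    then show ?thesis unfolding z_def using u_in by simp
  qed
  have A: "a m \<le> h * (norm (y m - z m)^2 - norm (y (Suc m) - z m)^2) + c" if m: "1 \<le> m" "m \<le> M" for m
  proof -
    define x where "x = fst (st (m - 1))"
    define Gs where "Gs = (\<Sum>r = (m - 1) * Kb + 1 .. (m - 1 + 1) * Kb. g r x)"
    have xin: "x \<in> Kset" using inv x_def by simp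
    have ysuc: "y (Suc m) = snd (Orc eps x (y m - eta *\<^sub>R Gs))"
    proof -
      have "st m = st (Suc (m - 1))" using m by simp
      then show ?thesis unfolding y_def x_def Gs_def st_def by (simp add: Let_def)
    qed
    have orc: "norm (y (Suc m) - z m) \<le> norm (y m - eta *\<^sub>R Gs - z m)"
      using ip_orc xin zin[OF m] eps_pos unfolding is_IP_oracle_def ysuc by blast
    have Gs_eq: "Gs = (\<Sum>k = 1 .. Kb. g ((m - 1) * Kb + k) x)"
    proof -
      have "(m - 1 + 1) * Kb = Kb + (m - 1) * Kb" by simp
      then have "Gs = (\<Sum>r = 1 + (m - 1) * Kb .. Kb + (m - 1) * Kb. g r x)" unfolding Gs_def
        by (simp add: add.commute)
      also have "\<dots> = (\<Sum>k = 1 .. Kb. g (k + (m - 1) * Kb) x)"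
        by (rule sum.shift_bounds_cl_nat_ivl)
      finally show ?thesis by (simp add: add.commute)
    qed
    have aeq: "a m = inner Gs (y m - z m)"
      unfolding a_def Gs_eq x_def by (simp add: inner_sum_left)
    have nG: "norm Gs \<le> real Kb * G"
    proof -
      have "norm Gs \<le> (\<Sum>k = 1 .. Kb. norm (g ((m - 1) * Kb + k) x))" unfolding Gs_eq by (rule norm_sum)
      also have "\<dots> \<le> (\<Sum>k = 1 .. Kb. G)" by (intro sum_mono grad_bound xin)
      finally show ?thesis by simp
    qed
    have nG2: "norm Gs ^2 \<le> (real Kb * G)^2" using nG by (intro power_mono) auto
    have "norm (y (Suc m) - z m)^2 \<le> norm (y m - eta *\<^sub>R Gs - z m)^2"
      using orc by (intro power_mono) auto
    also have "norm (y m - eta *\<^sub>R Gs - z m) = norm ((y m - z m) - eta *\<^sub>R Gs)"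
      by (simp add: algebra_simps)
    also have "\<dots>^2 = norm (y m - z m)^2 - 2 * eta * inner Gs (y m - z m) + eta^2 * norm Gs^2"
      by (rule sq_expand)
    finally have ineq: "2 * eta * a m \<le> norm (y m - z m)^2 - norm (y (Suc m) - z m)^2 + eta^2 * (real Kb * G)^2"
      using aeq mult_left_mono[OF nG2, of "eta^2"] by simp
    have "a m = h * (2 * eta * a m)" unfolding h_def using eta_pos by simp
    also have "\<dots> \<le> h * (norm (y m - z m)^2 - norm (y (Suc m) - z m)^2 + eta^2 * (real Kb * G)^2)"
      using ineq eta_pos unfolding h_def by (intro mult_left_mono) auto
    also have "\<dots> = h * (norm (y m - z m)^2 - norm (y (Suc m) - z m)^2) + c"
      unfolding h_def c_def using eta_pos by (simp add: field_simps power2_eq_square)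
    finally show ?thesis .
  qed
  have Y: "norm (y m) \<le> R" for m using inv[of "m - 1"] unfolding y_def by simp
  have Z: "norm (z m) \<le> R" if "1 \<le> m" "m \<le> M" for m using zin[OF that] bounded by auto
  have T1: "(\<Sum>m=1..M. a m) \<le> h * (2*R)^2 + M * c + h * (4*R) * (\<Sum>m=2..M. norm (z (m-1) - z m))"
  proof (rule tele[of h R M a y z c])
    show "0 \<le> h" unfolding h_def using eta_pos by simp
  qed (use R0 A Y Z in auto)
  have e1: "h * (2*R)^2 \<le> 7 / (4 * eta) * (2*R)^2" unfolding h_def using eta_pos
    by (intro mult_right_mono) (auto simp: field_simps)
  have e2: "M * c = eta / 2 * real Kb * real T * G\<^sup>2" unfolding c_def TM by (simp add: power2_eq_square)
  have e3: "h * (4*R) = 2 * R / eta" unfolding h_def using eta_pos by simp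
  have e4: "(\<Sum>m=2..M. norm (z (m-1) - z m)) = (\<Sum>m = 2 .. T div Kb. norm (u ((\<lambda>m. (m - 1) * Kb + 1) (m - 1)) - u ((\<lambda>m. (m - 1) * Kb + 1) m)))"
    unfolding z_def M_def by simp
  show ?thesis
    unfolding Let_def
    using T1[unfolded e2 e3] e1 e4
    unfolding a_def y_def z_def st_def M_def by linarith
qed

end
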